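(* Let $r,m\ge0$ and $k\ge1$ be integers and $n\ge0$. Then $$\lim_{q\to1}\frac{\sum_{j=0}^{2n+1}(-1)^jq^{rj^2+mj}\begin{bmatrix} 2n+1\\ j\end{bmatrix}_{q^k}}{(q;q^2)_{n+1}}=\big((2n+1)r+m\big)(k-2r)^n.$$
   Context: $(x;q)_n=\prod_{j=0}^{n-1}(1-q^jx)$. The Gaussian binomial coefficient is $\begin{bmatrix} n\\ j\end{bmatrix}_q=\frac{(q;q)_n}{(q;q)_j(q;q)_{n-j}}$ for $0\le j\le n$, a polynomial in $q$; $\begin{bmatrix} n\\ j\end{bmatrix}_{q^k}$ is this with $q$ replaced by $q^k$. The quotient is a rational function of $q$ and the limit is taken as $q\to1$. *)

theory Defs
  imports "HOL-Analysis.Analysis"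
begin

definition qpoch :: "real \<Rightarrow> real \<Rightarrow> nat \<Rightarrow> real" where
  "qpoch x q n = (\<Prod>j<n. 1 - q ^ j * x)"

definition qbinom :: "real \<Rightarrow> nat \<Rightarrow> nat \<Rightarrow> real" where
  "qbinom q n j = qpoch q q n / (qpoch q q j * qpoch q q (n - j))"

end

theory Submission
  imports Defs
begin

definition dif :: "int \<Rightarrow> (int \<Rightarrow> real \<Rightarrow> real) \<Rightarrow> int \<Rightarrow> real \<Rightarrow> real" where
  "dif h \<Phi> = (\<lambda>m q. \<Phi> (m + h) q - \<Phi> m q)"

fun D :: "int list \<Rightarrow> (int \<Rightarrow> real \<Rightarrow> real) \<Rightarrow> int \<Rightarrow> real \<Rightarrow> real" where
  "D [] \<Phi> = \<Phi>"
| "D (h # hs) \<Phi> = D hs (dif h \<Phi>)"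

lemma D_pointwise: "(\<And>m. \<Phi> m q = \<Psi> m q) \<Longrightarrow> D hs \<Phi> m q = D hs \<Psi> m q"
proof (induction hs arbitrary: \<Phi> \<Psi> m)
  case Nil then show ?case by simp
next
  case (Cons h hs)
  have "\<And>m. dif h \<Phi> m q = dif h \<Psi> m q" using Cons.prems by (simp add: dif_def)
  then have "D hs (dif h \<Phi>) m q = D hs (dif h \<Psi>) m q" by (rule Cons.IH)
  then show ?case by simp
qed

lemma D_add: "D hs (\<lambda>m q. \<Phi> m q + \<Psi> m q) m q = D hs \<Phi> m q + D hs \<Psi> m q"
proof (induction hs arbitrary: \<Phi> \<Psi> m)
  case Nil then show ?case by simp
next
  case (Cons h hs)
  have "dif h (\<lambda>m q. \<Phi> m q + \<Psi> m q) = (\<lambda>m q. dif h \<Phi> m q + dif h \<Psi> m q)"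
    by (simp add: dif_def fun_eq_iff)
  then show ?case using Cons.IH[of "dif h \<Phi>" "dif h \<Psi>"] by simp
qed

lemma D_scale: "D hs (\<lambda>m q. C q * \<Phi> m q) m q = C q * D hs \<Phi> m q"
proof (induction hs arbitrary: \<Phi> m)
  case Nil then show ?case by simp
next
  case (Cons h hs)
  have "dif h (\<lambda>m q. C q * \<Phi> m q) = (\<lambda>m q. C q * dif h \<Phi> m q)"
    by (simp add: dif_def fun_eq_iff algebra_simps)
  then show ?case using Cons.IH[of "dif h \<Phi>"] by simp
qed

lemma D_shift: "D hs (\<lambda>m. \<Phi> (m + s)) m q = D hs \<Phi> (m + s) q"
proof (induction hs arbitrary: \<Phi> m)
  case Nil then show ?case by simp
next
  case (Cons h hs)
  have "dif h (\<lambda>m. \<Phi> (m + s)) = (\<lambda>m. dif h \<Phi> (m + s))"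
    by (simp add: dif_def fun_eq_iff algebra_simps)
  then have "D (h # hs) (\<lambda>m. \<Phi> (m + s)) m q = D hs (\<lambda>m. dif h \<Phi> (m + s)) m q" by simp
  also have "\<dots> = D hs (dif h \<Phi>) (m + s) q" by (rule Cons.IH)
  finally show ?case by simp
qed

lemma D_const: "hs \<noteq> [] \<Longrightarrow> D hs (\<lambda>m q. C q) m q = 0"
proof (induction hs arbitrary: C m)
  case Nil then show ?case by simp
next
  case (Cons h hs)
  have "dif h (\<lambda>m q. C q) = (\<lambda>m q. 0 * C q)" by (simp add: dif_def fun_eq_iff)
  then show ?case using D_scale[of hs "\<lambda>_. 0" "\<lambda>m q. C q" m q] by simp
qed

lemma D_exp:
  assumes "q > 0"
  shows "D hs (\<lambda>m q. C q * q powr (e + of_int m)) m q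
         = C q * q powr (e + of_int m) * (\<Prod>h\<leftarrow>hs. q powr of_int h - 1)"
  using assms
proof (induction hs arbitrary: C m)
  case Nil then show ?case by simp
next
  case (Cons h hs)
  have "\<And>m. dif h (\<lambda>m q. C q * q powr (e + of_int m)) m q
        = (\<lambda>q. C q * (q powr of_int h - 1)) q * q powr (e + of_int m)"
  proof -
    fix m
    have "q powr (e + of_int (m + h)) = q powr (e + of_int m) * q powr of_int h"
      by (simp add: powr_add)
    then show "dif h (\<lambda>m q. C q * q powr (e + of_int m)) m q
        = (\<lambda>q. C q * (q powr of_int h - 1)) q * q powr (e + of_int m)"
      by (simp add: dif_def algebra_simps)
  qed
  then have "D (h # hs) (\<lambda>m q. C q * q powr (e + of_int m)) m q
     = D hs (\<lambda>m q. (\<lambda>q. C q * (q powr of_int h - 1)) q * q powr (e + of_int m)) m q"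
    unfolding D.simps by (rule D_pointwise)
  also have "\<dots> = C q * (q powr of_int h - 1) * q powr (e + of_int m) * (\<Prod>h\<leftarrow>hs. q powr of_int h - 1)"
    using Cons.IH[of "\<lambda>q. C q * (q powr of_int h - 1)"] Cons.prems by simp
  finally show ?case by simp
qed

definition bnd :: "(real \<Rightarrow> real) \<Rightarrow> nat \<Rightarrow> bool" where
  "bnd f p \<longleftrightarrow> (\<exists>C. eventually (\<lambda>q. \<bar>f q\<bar> \<le> C * \<bar>1 - q\<bar> ^ p) (at (1::real)))"

lemma ev_ne1: "eventually (\<lambda>q::real. q \<noteq> 1) (at 1)"
  by (simp add: eventually_at_filter)

lemma ev_pos: "eventually (\<lambda>q::real. q > 0) (at 1)"
  by (rule order_tendstoD(1)[OF tendsto_ident_at]) simp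

lemma ev_near: "eventually (\<lambda>q::real. \<bar>1 - q\<bar> \<le> 1) (at 1)"
proof -
  have "((\<lambda>q::real. 1 - q) \<longlongrightarrow> 1 - 1) (at 1)" by (intro tendsto_intros)
  then have "eventually (\<lambda>q::real. dist (1 - q) 0 < 1) (at 1)"
    by (intro tendstoD) auto
  then show ?thesis by eventually_elim (simp add: dist_real_def)
qed

lemma tendsto_bnd:
  assumes "((\<lambda>q. f q / (1 - q) ^ p) \<longlongrightarrow> L) (at 1)"
  shows "bnd f p"
proof -
  have "eventually (\<lambda>q. dist (f q / (1 - q) ^ p) L < 1) (at 1)"
    using assms by (rule tendstoD) simp
  then have "eventually (\<lambda>q. \<bar>f q\<bar> \<le> (\<bar>L\<bar> + 1) * \<bar>1 - q\<bar> ^ p) (at 1)"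
    using ev_ne1
  proof eventually_elim
    case (elim q)
    then have "\<bar>f q / (1 - q) ^ p\<bar> \<le> \<bar>L\<bar> + 1" by (simp add: dist_real_def)
    moreover have "\<bar>1 - q\<bar> ^ p > 0" using elim by simp
    ultimately show ?case by (simp add: abs_divide power_abs divide_le_eq)
  qed
  then show ?thesis unfolding bnd_def by blast
qed

lemma bnd_mult:
  assumes "bnd f p" "bnd g p'"
  shows "bnd (\<lambda>q. f q * g q) (p + p')"
proof -
  obtain C1 where 1: "eventually (\<lambda>q. \<bar>f q\<bar> \<le> C1 * \<bar>1 - q\<bar> ^ p) (at 1)"
    using assms(1) unfolding bnd_def by blast
  obtain C2 where 2: "eventually (\<lambda>q. \<bar>g q\<bar> \<le> C2 * \<bar>1 - q\<bar> ^ p') (at 1)"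
    using assms(2) unfolding bnd_def by blast
  have "eventually (\<lambda>q. \<bar>f q * g q\<bar> \<le> (C1 * C2) * \<bar>1 - q\<bar> ^ (p + p')) (at 1)"
    using 1 2
  proof eventually_elim
    case (elim q)
    have "\<bar>f q * g q\<bar> = \<bar>f q\<bar> * \<bar>g q\<bar>" by (simp add: abs_mult)
    also have "\<dots> \<le> (C1 * \<bar>1 - q\<bar> ^ p) * (C2 * \<bar>1 - q\<bar> ^ p')"
      using elim by (intro mult_mono) auto
    finally show ?case by (simp add: power_add algebra_simps)
  qed
  then show ?thesis unfolding bnd_def by blast
qed

lemma bnd_add:
  assumes "bnd f p" "bnd g p"
  shows "bnd (\<lambda>q. f q + g q) p"
proof -
  obtain C1 where 1: "eventually (\<lambda>q. \<bar>f q\<bar> \<le> C1 * \<bar>1 - q\<bar> ^ p) (at 1)"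
    using assms(1) unfolding bnd_def by blast
  obtain C2 where 2: "eventually (\<lambda>q. \<bar>g q\<bar> \<le> C2 * \<bar>1 - q\<bar> ^ p) (at 1)"
    using assms(2) unfolding bnd_def by blast
  have "eventually (\<lambda>q. \<bar>f q + g q\<bar> \<le> (C1 + C2) * \<bar>1 - q\<bar> ^ p) (at 1)"
    using 1 2 by eventually_elim (rule order_trans[OF abs_triangle_ineq], simp add: distrib_right)
  then show ?thesis unfolding bnd_def by blast
qed

lemma bnd_scale:
  assumes "bnd f p"
  shows "bnd (\<lambda>q. c * f q) p"
proof -
  obtain C1 where 1: "eventually (\<lambda>q. \<bar>f q\<bar> \<le> C1 * \<bar>1 - q\<bar> ^ p) (at 1)"
    using assms(1) unfolding bnd_def by blast
  have "eventually (\<lambda>q. \<bar>c * f q\<bar> \<le> (\<bar>c\<bar> * C1) * \<bar>1 - q\<bar> ^ p) (at 1)"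
    using 1 by eventually_elim (simp add: abs_mult mult.assoc mult_left_mono)
  then show ?thesis unfolding bnd_def by blast
qed

lemma bnd_mono:
  assumes "bnd f p" "p' \<le> p"
  shows "bnd f p'"
proof -
  obtain C1 where 1: "eventually (\<lambda>q. \<bar>f q\<bar> \<le> C1 * \<bar>1 - q\<bar> ^ p) (at 1)"
    using assms(1) unfolding bnd_def by blast
  have "eventually (\<lambda>q. \<bar>f q\<bar> \<le> \<bar>C1\<bar> * \<bar>1 - q\<bar> ^ p') (at 1)"
    using 1 ev_near
  proof eventually_elim
    case (elim q)
    have "C1 * \<bar>1 - q\<bar> ^ p \<le> \<bar>C1\<bar> * \<bar>1 - q\<bar> ^ p"
      by (intro mult_right_mono) auto
    also have "\<dots> \<le> \<bar>C1\<bar> * \<bar>1 - q\<bar> ^ p'"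
      using elim assms(2) by (intro mult_left_mono power_decreasing) auto
    finally show ?case using elim by linarith
  qed
  then show ?thesis unfolding bnd_def by blast
qed

lemma bnd_tendsto0:
  assumes "bnd f (Suc p)"
  shows "((\<lambda>q. f q / (1 - q) ^ p) \<longlongrightarrow> 0) (at 1)"
proof -
  obtain C1 where 1: "eventually (\<lambda>q. \<bar>f q\<bar> \<le> C1 * \<bar>1 - q\<bar> ^ Suc p) (at 1)"
    using assms(1) unfolding bnd_def by blast
  have "eventually (\<lambda>q. norm (f q / (1 - q) ^ p) \<le> \<bar>C1\<bar> * \<bar>1 - q\<bar>) (at 1)"
    using 1 ev_ne1
  proof eventually_elim
    case (elim q)
    then have pos: "\<bar>1 - q\<bar> ^ p > 0" by simp
    have "\<bar>f q\<bar> \<le> (\<bar>C1\<bar> * \<bar>1 - q\<bar>) * \<bar>1 - q\<bar> ^ p"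
    proof -
      have "C1 * \<bar>1 - q\<bar> ^ Suc p \<le> \<bar>C1\<bar> * \<bar>1 - q\<bar> ^ Suc p"
        by (intro mult_right_mono) auto
      then have "\<bar>f q\<bar> \<le> \<bar>C1\<bar> * \<bar>1 - q\<bar> ^ Suc p" using elim by linarith
      then show ?thesis by (simp add: algebra_simps)
    qed
    then have "\<bar>f q\<bar> / \<bar>1 - q\<bar> ^ p \<le> \<bar>C1\<bar> * \<bar>1 - q\<bar>"
      using pos by (subst divide_le_eq) simp
    then show ?case by (simp add: abs_divide power_abs)
  qed
  moreover have "((\<lambda>q. \<bar>C1\<bar> * \<bar>1 - q\<bar>) \<longlongrightarrow> 0) (at (1::real))"
  proof -
    have "((\<lambda>q. \<bar>C1\<bar> * \<bar>1 - q\<bar>) \<longlongrightarrow> \<bar>C1\<bar> * \<bar>1 - 1\<bar>) (at (1::real))"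
      by (intro tendsto_intros)
    then show ?thesis by simp
  qed
  ultimately show ?thesis by (rule Lim_null_comparison)
qed

lemma tendsto_lower0:
  fixes f :: "real \<Rightarrow> real"
  assumes "((\<lambda>q. f q / (1 - q) ^ p) \<longlongrightarrow> L) (at 1)" "p' < p"
  shows "((\<lambda>q. f q / (1 - q) ^ p') \<longlongrightarrow> 0) (at 1)"
proof -
  have "bnd f p" by (rule tendsto_bnd[OF assms(1)])
  then have "bnd f (Suc p')" by (rule bnd_mono) (use assms(2) in simp)
  then show ?thesis by (rule bnd_tendsto0)
qed

lemma bnd_cong:
  assumes "bnd f p" "eventually (\<lambda>q. f q = g q) (at 1)"
  shows "bnd g p"
proof -
  obtain C1 where 1: "eventually (\<lambda>q. \<bar>f q\<bar> \<le> C1 * \<bar>1 - q\<bar> ^ p) (at 1)"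
    using assms(1) unfolding bnd_def by blast
  have "eventually (\<lambda>q. \<bar>g q\<bar> \<le> C1 * \<bar>1 - q\<bar> ^ p) (at 1)"
    using 1 assms(2) by eventually_elim simp
  then show ?thesis unfolding bnd_def by blast
qed

definition ent :: "nat \<Rightarrow> real \<Rightarrow> (int \<Rightarrow> real \<Rightarrow> real) \<Rightarrow> int list \<Rightarrow> int \<Rightarrow> bool" where
  "ent a v \<Phi> hs m \<longleftrightarrow>
    (if even (a + length hs)
     then ((\<lambda>q. D hs \<Phi> m q / (1 - q) ^ ((a + length hs) div 2)) \<longlongrightarrow> v) (at 1)
     else bnd (D hs \<Phi> m) ((a + length hs + 1) div 2))"

definition good :: "nat \<Rightarrow> (nat \<Rightarrow> real) \<Rightarrow> (int \<Rightarrow> real \<Rightarrow> real) \<Rightarrow> bool" where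
  "good a \<sigma> \<Phi> \<longleftrightarrow> (\<forall>hs m. ent a (\<sigma> (length hs) * prod_list (map real_of_int hs)) \<Phi> hs m)"

lemma ent_Cons: "ent a v \<Phi> (h # hs) m \<longleftrightarrow> ent (Suc a) v (dif h \<Phi>) hs m"
  unfolding ent_def by simp

lemma good_dif:
  assumes "good a \<sigma> \<Phi>"
  shows "good (Suc a) (\<lambda>l. real_of_int h * \<sigma> (Suc l)) (dif h \<Phi>)"
  unfolding good_def
proof (intro allI)
  fix hs m
  have "ent a (\<sigma> (length (h # hs)) * prod_list (map real_of_int (h # hs))) \<Phi> (h # hs) m"
    using assms unfolding good_def by blast
  then show "ent (Suc a) (real_of_int h * \<sigma> (Suc (length hs)) * prod_list (map real_of_int hs)) (dif h \<Phi>) hs m"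
    by (simp add: ent_Cons mult_ac)
qed

lemma ent_shift: "ent a v (\<lambda>m. \<Phi> (m + s)) hs m \<longleftrightarrow> ent a v \<Phi> hs (m + s)"
proof -
  have "D hs (\<lambda>m. \<Phi> (m + s)) m = D hs \<Phi> (m + s)" by (rule ext, rule D_shift)
  then show ?thesis unfolding ent_def by simp
qed

lemma good_shift:
  assumes "good a \<sigma> \<Phi>"
  shows "good a \<sigma> (\<lambda>m. \<Phi> (m + s))"
  unfolding good_def
proof (intro allI)
  fix hs m
  show "ent a (\<sigma> (length hs) * prod_list (map real_of_int hs)) (\<lambda>m. \<Phi> (m + s)) hs m"
    unfolding ent_shift using assms unfolding good_def by blast
qed

lemma ent_add:
  assumes "ent a v1 \<Phi> hs m" "ent a v2 \<Psi> hs m"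
  shows "ent a (v1 + v2) (\<lambda>m q. \<Phi> m q + \<Psi> m q) hs m"
proof -
  have eq: "D hs (\<lambda>m q. \<Phi> m q + \<Psi> m q) m = (\<lambda>q. D hs \<Phi> m q + D hs \<Psi> m q)"
    by (rule ext, rule D_add)
  show ?thesis
  proof (cases "even (a + length hs)")
    case True
    then show ?thesis using assms unfolding ent_def eq
      by (simp add: add_divide_distrib tendsto_add)
  next
    case False
    then show ?thesis using assms unfolding ent_def eq
      by (simp add: bnd_add)
  qed
qed

lemma ent_scale:
  assumes "ent a v \<Phi> hs m"
  shows "ent a (c * v) (\<lambda>m q. c * \<Phi> m q) hs m"
proof -
  have eq: "D hs (\<lambda>m q. c * \<Phi> m q) m = (\<lambda>q. c * D hs \<Phi> m q)"
    by (rule ext, rule D_scale[where C="\<lambda>_. c"])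
  show ?thesis
  proof (cases "even (a + length hs)")
    case True
    have "((\<lambda>q. c * (D hs \<Phi> m q / (1 - q) ^ ((a + length hs) div 2))) \<longlongrightarrow> c * v) (at 1)"
      using assms True unfolding ent_def by (intro tendsto_mult_left) simp
    then show ?thesis using True unfolding ent_def eq by simp
  next
    case False
    then show ?thesis using assms unfolding ent_def eq
      by (simp add: bnd_scale)
  qed
qed

lemma ent_cong:
  assumes "ent a v \<Phi> hs m" "eventually (\<lambda>q. \<forall>m. \<Phi> m q = \<Psi> m q) (at 1)"
  shows "ent a v \<Psi> hs m"
proof -
  have ev: "eventually (\<lambda>q. D hs \<Phi> m q = D hs \<Psi> m q) (at 1)"
    using assms(2) by eventually_elim (rule D_pointwise, blast)
  show ?thesis
  proof (cases "even (a + length hs)")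
    case True
    have "eventually (\<lambda>q. D hs \<Phi> m q / (1 - q) ^ ((a + length hs) div 2)
        = D hs \<Psi> m q / (1 - q) ^ ((a + length hs) div 2)) (at 1)"
      using ev by eventually_elim simp
    note tc = tendsto_cong[OF this]
    have "((\<lambda>q. D hs \<Phi> m q / (1 - q) ^ ((a + length hs) div 2)) \<longlongrightarrow> v) (at 1)"
      using assms(1) True unfolding ent_def by simp
    then have "((\<lambda>q. D hs \<Psi> m q / (1 - q) ^ ((a + length hs) div 2)) \<longlongrightarrow> v) (at 1)"
      using tc by simp
    then show ?thesis using True unfolding ent_def by simp
  next
    case False
    have "bnd (D hs \<Phi> m) ((a + length hs + 1) div 2)"
      using assms(1) False unfolding ent_def by simp
    then have "bnd (D hs \<Psi> m) ((a + length hs + 1) div 2)"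
      by (rule bnd_cong) (use ev in simp)
    then show ?thesis using False unfolding ent_def by simp
  qed
qed

lemma good_add:
  assumes "good a \<sigma> \<Phi>" "good a \<tau> \<Psi>"
  shows "good a (\<lambda>l. \<sigma> l + \<tau> l) (\<lambda>m q. \<Phi> m q + \<Psi> m q)"
  unfolding good_def
proof (intro allI)
  fix hs m
  have "ent a (\<sigma> (length hs) * prod_list (map real_of_int hs) + \<tau> (length hs) * prod_list (map real_of_int hs))
     (\<lambda>m q. \<Phi> m q + \<Psi> m q) hs m"
    using assms unfolding good_def by (intro ent_add) blast+
  then show "ent a ((\<sigma> (length hs) + \<tau> (length hs)) * prod_list (map real_of_int hs)) (\<lambda>m q. \<Phi> m q + \<Psi> m q) hs m"
    by (simp add: distrib_right)
qed

lemma good_scale: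
  assumes "good a \<sigma> \<Phi>"
  shows "good a (\<lambda>l. c * \<sigma> l) (\<lambda>m q. c * \<Phi> m q)"
  unfolding good_def
proof (intro allI)
  fix hs m
  have "ent a (c * (\<sigma> (length hs) * prod_list (map real_of_int hs))) (\<lambda>m q. c * \<Phi> m q) hs m"
    using assms unfolding good_def by (intro ent_scale) blast
  then show "ent a (c * \<sigma> (length hs) * prod_list (map real_of_int hs)) (\<lambda>m q. c * \<Phi> m q) hs m"
    by (simp add: mult.assoc)
qed

lemma good_cong:
  assumes "good a \<sigma> \<Phi>" "eventually (\<lambda>q. \<forall>m. \<Phi> m q = \<Psi> m q) (at 1)" "\<And>l. \<sigma> l = \<tau> l"
  shows "good a \<tau> \<Psi>"
  unfolding good_def
proof (intro allI)
  fix hs m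
  have "ent a (\<sigma> (length hs) * prod_list (map real_of_int hs)) \<Psi> hs m"
    using assms(1) unfolding good_def by (intro ent_cong[OF _ assms(2)]) blast
  then show "ent a (\<tau> (length hs) * prod_list (map real_of_int hs)) \<Psi> hs m"
    using assms(3) by simp
qed

definition rho :: "nat \<Rightarrow> (nat \<Rightarrow> real) \<Rightarrow> (nat \<Rightarrow> real) \<Rightarrow> nat \<Rightarrow> real" where
  "rho a \<sigma> \<tau> l = (\<Sum>s\<le>l. if even (a + s) then of_nat (l choose s) * \<sigma> s * \<tau> (l - s) else 0)"

lemma rho_step:
  "rho (Suc a) (\<lambda>l. h * \<sigma> (Suc l)) \<tau> l + rho a \<sigma> (\<lambda>l. h * \<tau> (Suc l)) l
   = h * rho a \<sigma> \<tau> (Suc l)"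
proof -
  define g where "g s = (if even (a + s) then \<sigma> s * \<tau> (Suc l - s) else 0)" for s
  have A: "rho (Suc a) (\<lambda>l. h * \<sigma> (Suc l)) \<tau> l = h * (\<Sum>s\<le>l. of_nat (l choose s) * g (Suc s))"
    unfolding rho_def g_def sum_distrib_left by (intro sum.cong refl) (auto simp: mult_ac)
  have B: "rho a \<sigma> (\<lambda>l. h * \<tau> (Suc l)) l = h * (\<Sum>s\<le>l. of_nat (l choose s) * g s)"
    unfolding rho_def g_def sum_distrib_left
    by (intro sum.cong refl) (auto simp: Suc_diff_le mult_ac)
  have R: "rho a \<sigma> \<tau> (Suc l) = (\<Sum>s\<le>Suc l. of_nat (Suc l choose s) * g s)"
    unfolding rho_def g_def by (intro sum.cong refl) auto
  have R2: "(\<Sum>s\<le>Suc l. of_nat (Suc l choose s) * g s)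
      = g 0 + (\<Sum>s\<le>l. of_nat (l choose s) * g (Suc s)) + (\<Sum>s\<le>l. of_nat (l choose Suc s) * g (Suc s))"
    by (simp add: sum.atMost_Suc_shift distrib_right sum.distrib del: sum.atMost_Suc)
  have B2: "(\<Sum>s\<le>l. of_nat (l choose s) * g s) = g 0 + (\<Sum>s\<le>l. of_nat (l choose Suc s) * g (Suc s))"
  proof -
    have "(\<Sum>s\<le>l. of_nat (l choose s) * g s) = (\<Sum>s\<le>Suc l. of_nat (l choose s) * g s)"
      by simp
    also have "\<dots> = g 0 + (\<Sum>s\<le>l. of_nat (l choose Suc s) * g (Suc s))"
      by (simp add: sum.atMost_Suc_shift del: sum.atMost_Suc)
    finally show ?thesis .
  qed
  show ?thesis using A B R R2 B2 by (simp add: algebra_simps)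
qed

lemma ent_prod_nil:
  assumes "ent a x \<Phi> [] m" "ent b y \<Psi> [] m"
  shows "ent (a + b) (if even a then x * y else 0) (\<lambda>m q. \<Phi> m q * \<Psi> m q) [] m"
proof (cases "even a")
  case ea: True
  show ?thesis
  proof (cases "even b")
    case eb: True
    have 1: "((\<lambda>q. \<Phi> m q / (1 - q) ^ (a div 2)) \<longlongrightarrow> x) (at 1)"
      using assms(1) ea unfolding ent_def by simp
    have 2: "((\<lambda>q. \<Psi> m q / (1 - q) ^ (b div 2)) \<longlongrightarrow> y) (at 1)"
      using assms(2) eb unfolding ent_def by simp
    have "((\<lambda>q. (\<Phi> m q / (1 - q) ^ (a div 2)) * (\<Psi> m q / (1 - q) ^ (b div 2))) \<longlongrightarrow> x * y) (at 1)"
      using 1 2 by (rule tendsto_mult)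
    moreover have "(a + b) div 2 = a div 2 + b div 2" using ea eb by auto
    ultimately show ?thesis using ea eb unfolding ent_def
      by (simp add: power_add)
  next
    case ob: False
    have 1: "bnd (\<Phi> m) (a div 2)"
      using assms(1) ea unfolding ent_def by (simp add: tendsto_bnd)
    have 2: "bnd (\<Psi> m) ((b + 1) div 2)"
      using assms(2) ob unfolding ent_def by simp
    have "bnd (\<lambda>q. \<Phi> m q * \<Psi> m q) (a div 2 + (b + 1) div 2)"
      using 1 2 by (rule bnd_mult)
    moreover have "(a + b + 1) div 2 = a div 2 + (b + 1) div 2" using ea ob by auto
    ultimately show ?thesis using ea ob unfolding ent_def by simp
  qed
next
  case oa: False
  show ?thesis
  proof (cases "even b")
    case eb: True
    have 1: "bnd (\<Phi> m) ((a + 1) div 2)"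
      using assms(1) oa unfolding ent_def by simp
    have 2: "bnd (\<Psi> m) (b div 2)"
      using assms(2) eb unfolding ent_def by (simp add: tendsto_bnd)
    have "bnd (\<lambda>q. \<Phi> m q * \<Psi> m q) ((a + 1) div 2 + b div 2)"
      using 1 2 by (rule bnd_mult)
    moreover have "(a + b + 1) div 2 = (a + 1) div 2 + b div 2" using oa eb by auto
    ultimately show ?thesis using oa eb unfolding ent_def by simp
  next
    case ob: False
    have 1: "bnd (\<Phi> m) ((a + 1) div 2)"
      using assms(1) oa unfolding ent_def by simp
    have 2: "bnd (\<Psi> m) ((b + 1) div 2)"
      using assms(2) ob unfolding ent_def by simp
    have "bnd (\<lambda>q. \<Phi> m q * \<Psi> m q) ((a + 1) div 2 + (b + 1) div 2)"
      using 1 2 by (rule bnd_mult)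
    moreover have "(a + 1) div 2 + (b + 1) div 2 = Suc ((a + b) div 2)" using oa ob by presburger
    ultimately have "((\<lambda>q. \<Phi> m q * \<Psi> m q / (1 - q) ^ ((a + b) div 2)) \<longlongrightarrow> 0) (at 1)"
      using bnd_tendsto0 by simp
    then show ?thesis using oa ob unfolding ent_def by simp
  qed
qed

lemma ent_prod:
  assumes "good a \<sigma> \<Phi>" "good b \<tau> \<Psi>"
  shows "ent (a + b) (rho a \<sigma> \<tau> (length hs) * prod_list (map real_of_int hs))
           (\<lambda>i q. \<Phi> i q * \<Psi> i q) hs m"
  using assms
proof (induction hs arbitrary: a b \<sigma> \<tau> \<Phi> \<Psi> m)
  case (Nil a b \<sigma> \<tau> \<Phi> \<Psi> m)
  have 1: "ent a (\<sigma> 0) \<Phi> [] m" using Nil.prems(1) unfolding good_def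
    by (metis list.size(3) mult.right_neutral prod_list.Nil list.simps(8))
  have 2: "ent b (\<tau> 0) \<Psi> [] m" using Nil.prems(2) unfolding good_def
    by (metis list.size(3) mult.right_neutral prod_list.Nil list.simps(8))
  have "rho a \<sigma> \<tau> 0 = (if even a then \<sigma> 0 * \<tau> 0 else 0)"
    unfolding rho_def by simp
  then show ?case using ent_prod_nil[OF 1 2] by simp
next
  case (Cons h hs a b \<sigma> \<tau> \<Phi> \<Psi> m)
  let ?l = "length hs"
  let ?P = "prod_list (map real_of_int hs)"
  define \<sigma>1 where "\<sigma>1 = (\<lambda>l. real_of_int h * \<sigma> (Suc l))"
  define \<tau>1 where "\<tau>1 = (\<lambda>l. real_of_int h * \<tau> (Suc l))"
  have g1: "good (Suc a) \<sigma>1 (dif h \<Phi>)" unfolding \<sigma>1_def by (rule good_dif[OF Cons.prems(1)])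
  have g2: "good b \<tau> (\<lambda>m. \<Psi> (m + h))" by (rule good_shift[OF Cons.prems(2)])
  have g3: "good (Suc b) \<tau>1 (dif h \<Psi>)" unfolding \<tau>1_def by (rule good_dif[OF Cons.prems(2)])
  have e1: "ent (Suc (a + b)) (rho (Suc a) \<sigma>1 \<tau> ?l * ?P) (\<lambda>m q. dif h \<Phi> m q * \<Psi> (m + h) q) hs m"
    using Cons.IH[OF g1 g2] by simp
  have e2: "ent (Suc (a + b)) (rho a \<sigma> \<tau>1 ?l * ?P) (\<lambda>m q. \<Phi> m q * dif h \<Psi> m q) hs m"
    using Cons.IH[OF Cons.prems(1) g3] by simp
  have "ent (Suc (a + b)) (rho (Suc a) \<sigma>1 \<tau> ?l * ?P + rho a \<sigma> \<tau>1 ?l * ?P)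
      (\<lambda>m q. dif h \<Phi> m q * \<Psi> (m + h) q + \<Phi> m q * dif h \<Psi> m q) hs m"
    using ent_add[OF e1 e2] by simp
  moreover have "rho (Suc a) \<sigma>1 \<tau> ?l * ?P + rho a \<sigma> \<tau>1 ?l * ?P
      = rho a \<sigma> \<tau> (length (h # hs)) * prod_list (map real_of_int (h # hs))"
  proof -
    have st: "rho (Suc a) \<sigma>1 \<tau> ?l + rho a \<sigma> \<tau>1 ?l = real_of_int h * rho a \<sigma> \<tau> (Suc ?l)"
      unfolding \<sigma>1_def \<tau>1_def by (rule rho_step)
    have "rho (Suc a) \<sigma>1 \<tau> ?l * ?P + rho a \<sigma> \<tau>1 ?l * ?P = (rho (Suc a) \<sigma>1 \<tau> ?l + rho a \<sigma> \<tau>1 ?l) * ?P"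
      by (simp add: distrib_right)
    also have "\<dots> = real_of_int h * rho a \<sigma> \<tau> (Suc ?l) * ?P" by (simp only: st)
    finally show ?thesis by simp
  qed
  moreover have "\<forall>m q. dif h \<Phi> m q * \<Psi> (m + h) q + \<Phi> m q * dif h \<Psi> m q
      = dif h (\<lambda>m q. \<Phi> m q * \<Psi> m q) m q"
    by (simp add: dif_def algebra_simps)
  ultimately have "ent (Suc (a + b)) (rho a \<sigma> \<tau> (length (h # hs)) * prod_list (map real_of_int (h # hs)))
      (dif h (\<lambda>m q. \<Phi> m q * \<Psi> m q)) hs m"
    using ent_cong[where \<Psi>="dif h (\<lambda>m q. \<Phi> m q * \<Psi> m q)"] by simp
  then show ?case by (simp add: ent_Cons)
qed

lemma good_prod:
  assumes "good a \<sigma> \<Phi>" "good b \<tau> \<Psi>"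
  shows "good (a + b) (rho a \<sigma> \<tau>) (\<lambda>m q. \<Phi> m q * \<Psi> m q)"
  unfolding good_def using ent_prod[OF assms] by blast

lemma powr_quot_lim: "((\<lambda>q::real. (q powr e - 1) / (1 - q)) \<longlongrightarrow> - e) (at 1)"
proof -
  have d: "((\<lambda>z::real. z powr e) has_real_derivative e * 1 powr (e - 1)) (at 1)"
    by (rule has_real_derivative_powr) simp
  have "((\<lambda>y::real. (y powr e - 1 powr e) / (y - 1)) \<longlongrightarrow> e * 1 powr (e - 1)) (at 1)"
    using d unfolding has_field_derivative_iff .
  then have "((\<lambda>y::real. - ((y powr e - 1 powr e) / (y - 1))) \<longlongrightarrow> - (e * 1 powr (e - 1))) (at 1)"
    by (rule tendsto_minus)
  then have 1: "((\<lambda>y::real. - ((y powr e - 1 powr e) / (y - 1))) \<longlongrightarrow> - e) (at 1)"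
    by (simp only: powr_one_eq_one mult_1_right)
  have 2: "- ((y powr e - 1 powr e) / (y - 1)) = (y powr e - 1) / (1 - y)" for y :: real
  proof -
    have "1 - y = - (y - 1)" by simp
    then show "- ((y powr e - 1 powr e) / (y - 1)) = (y powr e - 1) / (1 - y)"
      by (simp only: divide_minus_right powr_one_eq_one)
  qed
  show ?thesis using 1 unfolding 2 .
qed

lemma prod_quot_lim:
  "((\<lambda>q::real. (\<Prod>h\<leftarrow>hs. q powr of_int h - 1) / (1 - q) ^ length hs)
     \<longlongrightarrow> (\<Prod>h\<leftarrow>hs. - real_of_int h)) (at 1)"
proof (induction hs)
  case Nil then show ?case by simp
next
  case (Cons h hs)
  have "((\<lambda>q::real. ((q powr of_int h - 1) / (1 - q)) *
         ((\<Prod>h\<leftarrow>hs. q powr of_int h - 1) / (1 - q) ^ length hs))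
     \<longlongrightarrow> (- real_of_int h) * (\<Prod>h\<leftarrow>hs. - real_of_int h)) (at 1)"
    by (intro tendsto_mult powr_quot_lim Cons.IH)
  then show ?case by (simp add: power_Suc)
qed

definition one_sym :: "nat \<Rightarrow> real" where "one_sym l = (if l = 0 then 1 else 0)"

lemma good_one: "good 0 one_sym (\<lambda>m q. 1)"
  unfolding good_def
proof (intro allI)
  fix hs :: "int list" and m :: int
  show "ent 0 (one_sym (length hs) * prod_list (map real_of_int hs)) (\<lambda>m q. 1) hs m"
  proof (cases "hs = []")
    case True then show ?thesis unfolding ent_def one_sym_def by simp
  next
    case False
    then have D0: "D hs (\<lambda>m q. 1) m = (\<lambda>q. 0)" by (intro ext D_const)
    show ?thesis using False unfolding ent_def one_sym_def D0
      by (auto simp: bnd_def intro!: exI[of _ 0])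
  qed
qed

definition u_fun :: "nat \<Rightarrow> int \<Rightarrow> real \<Rightarrow> real" where
  "u_fun r = (\<lambda>m q. 1 - q powr (real r + real_of_int m))"

definition u_sym :: "nat \<Rightarrow> real" where "u_sym l = (if l = 1 then 1 else 0)"

lemma D_u:
  assumes "hs \<noteq> []" "q > 0"
  shows "D hs (u_fun r) m q = - (q powr (real r + real_of_int m)) * (\<Prod>h\<leftarrow>hs. q powr of_int h - 1)"
proof -
  have "D hs (u_fun r) m q = D hs (\<lambda>m q. (\<lambda>q. 1) q + (\<lambda>q. -1) q * q powr (real r + real_of_int m)) m q"
    by (rule D_pointwise) (simp add: u_fun_def)
  also have "\<dots> = D hs (\<lambda>m q. 1) m q + D hs (\<lambda>m q. (\<lambda>q. -1) q * q powr (real r + real_of_int m)) m q"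
    by (rule D_add)
  also have "\<dots> = - (q powr (real r + real_of_int m)) * (\<Prod>h\<leftarrow>hs. q powr of_int h - 1)"
  proof -
    have c0: "D hs (\<lambda>m q. 1) m q = 0" by (rule D_const[OF assms(1)])
    have c1: "D hs (\<lambda>m q. (\<lambda>q. -1) q * q powr (real r + real_of_int m)) m q
        = (\<lambda>q. -1) q * q powr (real r + real_of_int m) * (\<Prod>h\<leftarrow>hs. q powr of_int h - 1)"
      by (rule D_exp[OF assms(2)])
    show ?thesis unfolding c0 c1 by simp
  qed
  finally show ?thesis .
qed

lemma good_u: "good 1 u_sym (u_fun r)"
  unfolding good_def
proof (intro allI)
  fix hs :: "int list" and m :: int
  show "ent 1 (u_sym (length hs) * prod_list (map real_of_int hs)) (u_fun r) hs m"
  proof (cases "hs = []")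
    case True
    have "((\<lambda>q::real. - ((q powr (real r + real_of_int m) - 1) / (1 - q))) \<longlongrightarrow> - (- (real r + real_of_int m))) (at 1)"
      by (intro tendsto_minus powr_quot_lim)
    moreover have "(\<lambda>q::real. - ((q powr (real r + real_of_int m) - 1) / (1 - q))) = (\<lambda>q. u_fun r m q / (1 - q) ^ 1)"
      by (rule ext) (simp add: u_fun_def minus_divide_left)
    ultimately have "((\<lambda>q::real. u_fun r m q / (1 - q) ^ 1) \<longlongrightarrow> real r + real_of_int m) (at 1)"
      by (simp add: add.commute)
    then have "bnd (u_fun r m) 1" by (rule tendsto_bnd)
    then show ?thesis using True unfolding ent_def by simp
  next
    case False
    define l where "l = length hs"
    have lpos: "l \<ge> 1" using False unfolding l_def by (cases hs) auto
    have ev: "eventually (\<lambda>q. - (q powr (real r + real_of_int m)) *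
        ((\<Prod>h\<leftarrow>hs. q powr of_int h - 1) / (1 - q) ^ l) = D hs (u_fun r) m q / (1 - q) ^ l) (at 1)"
      using ev_pos by eventually_elim (simp add: D_u[OF False])
    have "((\<lambda>q::real. - (q powr (real r + real_of_int m)) *
        ((\<Prod>h\<leftarrow>hs. q powr of_int h - 1) / (1 - q) ^ l))
        \<longlongrightarrow> - (1 powr (real r + real_of_int m)) * (\<Prod>h\<leftarrow>hs. - real_of_int h)) (at 1)"
      unfolding l_def by (intro tendsto_mult tendsto_minus prod_quot_lim tendsto_intros) simp
    then have "((\<lambda>q::real. - (q powr (real r + real_of_int m)) *
        ((\<Prod>h\<leftarrow>hs. q powr of_int h - 1) / (1 - q) ^ l))
        \<longlongrightarrow> - (\<Prod>h\<leftarrow>hs. - real_of_int h)) (at 1)" by simp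
    then have lim: "((\<lambda>q. D hs (u_fun r) m q / (1 - q) ^ l) \<longlongrightarrow> - (\<Prod>h\<leftarrow>hs. - real_of_int h)) (at 1)"
      using ev by (rule Lim_transform_eventually)
    show ?thesis
    proof (cases "even (1 + l)")
      case True
      show ?thesis
      proof (cases "l = 1")
        case True
        then obtain h where hs: "hs = [h]" unfolding l_def by (cases hs) auto
        show ?thesis using lim True hs unfolding ent_def u_sym_def l_def by simp
      next
        case False
        with lpos have "l \<ge> 2" by simp
        then have "(1 + l) div 2 < l" by presburger
        from tendsto_lower0[OF lim this] show ?thesis
          using True False unfolding ent_def u_sym_def l_def by simp
      qed
    next
      case False
      then have "l \<ge> 2" using lpos by (cases "l = 1") auto
      then have "(1 + l + 1) div 2 \<le> l" by presburger
      with bnd_mono[OF tendsto_bnd[OF lim]] have "bnd (D hs (u_fun r) m) ((1 + l + 1) div 2)" by blast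
      then show ?thesis using False unfolding ent_def l_def by simp
    qed
  qed
qed

fun gb :: "real \<Rightarrow> nat \<Rightarrow> nat \<Rightarrow> real" where
  "gb Q 0 j = (if j = 0 then 1 else 0)"
| "gb Q (Suc n) 0 = 1"
| "gb Q (Suc n) (Suc j) = gb Q n j + Q ^ Suc j * gb Q n (Suc j)"

lemma gb_zero: "n < j \<Longrightarrow> gb Q n j = 0"
proof (induction n arbitrary: j)
  case 0 then show ?case by simp
next
  case (Suc n)
  then obtain j' where "j = Suc j'" by (cases j) auto
  with Suc show ?case by simp
qed

lemma gb_0: "gb Q n 0 = 1"
  by (cases n) auto

definition F :: "nat \<Rightarrow> nat \<Rightarrow> nat \<Rightarrow> int \<Rightarrow> real \<Rightarrow> real" where
  "F r k N m q = (\<Sum>j=0..N. (-1) ^ j * q powr (real r * real j ^ 2 + real_of_int m * real j) * gb (q ^ k) N j)"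

lemma F_rec:
  assumes q: "q > 0"
  shows "F r k (Suc N) m q = F r k N (m + int k) q - q powr (real r + real_of_int m) * F r k N (m + 2 * int r) q"
proof -
  define Q where "Q = q ^ k"
  define a where "a j = (-1) ^ j * q powr (real r * real j ^ 2 + real_of_int m * real j)" for j :: nat
  define b where "b j = a j * Q ^ j * gb Q N j" for j
  have "F r k (Suc N) m q = (\<Sum>j\<le>Suc N. a j * gb Q (Suc N) j)"
    unfolding F_def a_def Q_def by (simp add: atLeast0AtMost)
  also have "\<dots> = a 0 + (\<Sum>j\<le>N. a (Suc j) * gb Q (Suc N) (Suc j))"
    by (simp add: sum.atMost_Suc_shift gb_0 del: sum.atMost_Suc)
  also have "\<dots> = a 0 + (\<Sum>j\<le>N. a (Suc j) * gb Q N j) + (\<Sum>j\<le>N. b (Suc j))"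
    by (simp add: b_def distrib_left sum.distrib mult_ac)
  also have "(\<Sum>j\<le>N. b (Suc j)) = (\<Sum>j\<le>Suc N. b j) - b 0"
    by (simp add: sum.atMost_Suc_shift del: sum.atMost_Suc)
  also have "(\<Sum>j\<le>Suc N. b j) = (\<Sum>j\<le>N. b j)"
    by (simp add: b_def gb_zero)
  also have "b 0 = a 0" by (simp add: b_def gb_0)
  finally have 1: "F r k (Suc N) m q = (\<Sum>j\<le>N. b j) + (\<Sum>j\<le>N. a (Suc j) * gb Q N j)" by simp
  have 2: "(\<Sum>j\<le>N. b j) = F r k N (m + int k) q"
    unfolding F_def atLeast0AtMost
  proof (intro sum.cong refl)
    fix j assume "j \<in> {..N}"
    have "Q ^ j = q powr (real k * real j)"
      unfolding Q_def using q by (simp add: powr_realpow[symmetric] power_mult[symmetric] powr_powr)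
    then have "q powr (real r * real j ^ 2 + real_of_int m * real j) * Q ^ j
        = q powr (real r * real j ^ 2 + real_of_int (m + int k) * real j)"
      by (simp add: powr_add[symmetric] algebra_simps)
    then show "b j = (-1) ^ j * q powr (real r * real j ^ 2 + real_of_int (m + int k) * real j) * gb (q ^ k) N j"
      unfolding b_def a_def Q_def by (simp add: mult_ac)
  qed
  have 3: "(\<Sum>j\<le>N. a (Suc j) * gb Q N j) = - (q powr (real r + real_of_int m) * F r k N (m + 2 * int r) q)"
    unfolding F_def atLeast0AtMost sum_distrib_left sum_negf[symmetric]
  proof (intro sum.cong refl)
    fix j assume "j \<in> {..N}"
    have e: "real r * real (Suc j) ^ 2 + real_of_int m * real (Suc j)
        = (real r + real_of_int m) + (real r * real j ^ 2 + real_of_int (m + 2 * int r) * real j)"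
      by (simp add: power2_eq_square algebra_simps)
    show "a (Suc j) * gb Q N j = - (q powr (real r + real_of_int m) *
        ((-1) ^ j * q powr (real r * real j ^ 2 + real_of_int (m + 2 * int r) * real j) * gb (q ^ k) N j))"
      unfolding a_def Q_def e powr_add by simp
  qed
  show ?thesis using 1 2 3 by simp
qed

lemma F_0: "q > 0 \<Longrightarrow> F r k 0 m q = 1"
  unfolding F_def by simp

fun sig :: "real \<Rightarrow> nat \<Rightarrow> nat \<Rightarrow> real" where
  "sig c 0 l = (if l = 0 then 1 else 0)"
| "sig c (Suc N) l = c * sig c N (Suc l) + of_nat l * sig c N (l - 1)"

lemma rho_u: "rho 1 u_sym \<sigma> l = of_nat l * \<sigma> (l - 1)"
proof -
  have "rho 1 u_sym \<sigma> l = (\<Sum>s\<le>l. if s = 1 then of_nat l * \<sigma> (l - 1) else 0)"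
    unfolding rho_def u_sym_def by (intro sum.cong refl) auto
  also have "\<dots> = of_nat l * \<sigma> (l - 1)"
    by (cases l) (simp_all add: sum.delta)
  finally show ?thesis .
qed

lemma good_F: "good N (sig (of_int (int k - 2 * int r)) N) (F r k N)"
proof (induction N)
  case 0
  show ?case
    by (rule good_cong[OF good_one]) (use ev_pos in \<open>auto elim!: eventually_mono simp: F_0 one_sym_def\<close>)
next
  case (Suc N)
  define h where "h = int k - 2 * int r"
  define c where "c = (of_int h :: real)"
  have IH: "good N (sig c N) (F r k N)" using Suc.IH unfolding c_def h_def .
  have g1: "good (Suc N) (\<lambda>l. real_of_int h * sig c N (Suc l)) (\<lambda>m. dif h (F r k N) (m + 2 * int r))"
    by (rule good_shift[OF good_dif[OF IH]])
  have g2: "good (1 + N) (rho 1 u_sym (sig c N)) (\<lambda>i q. u_fun r i q * F r k N (i + 2 * int r) q)"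
    using good_prod[OF good_u good_shift[OF IH, of "2 * int r"]] by simp
  have g: "good (Suc N) (\<lambda>l. real_of_int h * sig c N (Suc l) + rho 1 u_sym (sig c N) l)
       (\<lambda>m q. dif h (F r k N) (m + 2 * int r) q + u_fun r m q * F r k N (m + 2 * int r) q)"
    using good_add[OF g1 g2[unfolded add.commute[of 1 N] Suc_eq_plus1[symmetric]]] by simp
  show ?case
  proof (rule good_cong[OF g])
    show "eventually (\<lambda>q. \<forall>m. dif h (F r k N) (m + 2 * int r) q + u_fun r m q * F r k N (m + 2 * int r) q
        = F r k (Suc N) m q) (at 1)"
      using ev_pos
    proof eventually_elim
      case (elim q)
      show ?case
      proof
        fix m
        have "m + 2 * int r + h = m + int k" unfolding h_def by simp
        then have "F r k N (m + 2 * int r + h) q = F r k N (m + int k) q"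
          by (rule arg_cong[where f="\<lambda>x. F r k N x q"])
        then have e: "dif h (F r k N) (m + 2 * int r) q = F r k N (m + int k) q - F r k N (m + 2 * int r) q"
          unfolding dif_def by (simp only:)
        show "dif h (F r k N) (m + 2 * int r) q + u_fun r m q * F r k N (m + 2 * int r) q
            = F r k (Suc N) m q"
          unfolding F_rec[OF elim] e u_fun_def by (simp add: algebra_simps)
      qed
    qed
  next
    fix l
    show "real_of_int h * sig c N (Suc l) + rho 1 u_sym (sig c N) l = sig (of_int (int k - 2 * int r)) (Suc N) l"
      unfolding rho_u c_def h_def by simp
  qed
qed

lemma sig_zero: "N < l \<Longrightarrow> sig c N l = 0"
proof (induction N arbitrary: l)
  case 0 then show ?case by simp
next
  case (Suc N)
  then show ?case by simp
qed

lemma sig_closed: "sig c (l + 2 * j) l * (fact j * 2 ^ j) = c ^ j * fact (l + 2 * j)"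
proof (induction "l + 2 * j" arbitrary: l j)
  case 0
  then show ?case by simp
next
  case (Suc N)
  show ?case
  proof (cases j)
    case 0
    then have l: "l = Suc N" using Suc.hyps by simp
    have ih: "sig c N N * (fact 0 * 2 ^ 0) = c ^ 0 * fact N" using Suc.hyps(1)[of N 0] by simp
    have "sig c (Suc N) (Suc N) = of_nat (Suc N) * sig c N N"
      using sig_zero[of N "Suc (Suc N)" c] by simp
    then show ?thesis using ih l 0 by (simp add: fact_Suc)
  next
    case (Suc j')
    then have N1: "N = Suc l + 2 * j'" using Suc.hyps(2) by simp
    have ih1: "sig c N (Suc l) * (fact j' * 2 ^ j') = c ^ j' * fact N"
      using Suc.hyps(1)[of "Suc l" j'] N1 by simp
    have eqN: "l + 2 * j = Suc N" using Suc.hyps(2) by simp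
    have fj: "fact j * 2 ^ j = (2 * real j) * (fact j' * 2 ^ j')"
      using Suc by (simp add: fact_Suc)
    show ?thesis
    proof (cases l)
      case 0
      have "sig c (Suc N) 0 = c * sig c N 1" by simp
      then have "sig c (l + 2 * j) l * (fact j * 2 ^ j) = c * (2 * real j) * (sig c N 1 * (fact j' * 2 ^ j'))"
        using eqN 0 fj by (simp add: mult_ac)
      also have "\<dots> = c * (2 * real j) * (c ^ j' * fact N)" using ih1 0 by simp
      also have "\<dots> = c ^ j * ((2 * real j) * fact N)" using Suc by (simp add: mult_ac)
      also have "(2 * real j) = real (Suc N)" using eqN 0 by simp
      also have "real (Suc N) * fact N = (fact (Suc N) :: real)" by (simp add: fact_Suc)
      finally show ?thesis using eqN by simp
    next
      case (Suc l')
      have N2: "N = l' + 2 * j" using N1 Suc \<open>j = Suc j'\<close> by simp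
      have ih2: "sig c N l' * (fact j * 2 ^ j) = c ^ j * fact N"
        using Suc.hyps(1)[of l' j] N2 by simp
      have "sig c (Suc N) l = c * sig c N (Suc l) + real l * sig c N l'"
        using Suc by simp
      then have "sig c (l + 2 * j) l * (fact j * 2 ^ j)
          = c * (2 * real j) * (sig c N (Suc l) * (fact j' * 2 ^ j')) + real l * (sig c N l' * (fact j * 2 ^ j))"
        using eqN fj by (simp add: algebra_simps)
      also have "\<dots> = c * (2 * real j) * (c ^ j' * fact N) + real l * (c ^ j * fact N)"
        using ih1 ih2 by simp
      also have "\<dots> = c ^ j * ((2 * real j + real l) * fact N)"
        using \<open>j = Suc j'\<close> by (simp add: algebra_simps)
      also have "2 * real j + real l = real (Suc N)" using eqN by simp
      also have "real (Suc N) * fact N = (fact (Suc N) :: real)" by (simp add: fact_Suc)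
      finally show ?thesis using eqN by simp
    qed
  qed
qed

lemma fact_odd_prod: "(fact (2 * n + 1) :: real) = (\<Prod>i<n+1. real (2 * i + 1)) * (fact n * 2 ^ n)"
proof (induction n)
  case 0 then show ?case by simp
next
  case (Suc n)
  have "(fact (2 * Suc n + 1) :: real) = real (2 * n + 3) * real (2 * n + 2) * fact (2 * n + 1)"
    by (simp add: fact_Suc algebra_simps numeral_3_eq_3)
  also have "\<dots> = real (2 * n + 3) * real (2 * n + 2) * ((\<Prod>i<n+1. real (2 * i + 1)) * (fact n * 2 ^ n))"
    using Suc by simp
  also have "\<dots> = (\<Prod>i<Suc n + 1. real (2 * i + 1)) * (fact (Suc n) * 2 ^ Suc n)"
    by (simp add: fact_Suc algebra_simps)
  finally show ?case .
qed

lemma sig_val: "sig c (2 * n + 1) 1 = c ^ n * (\<Prod>i<n+1. real (2 * i + 1))"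
proof -
  have 1: "sig c (1 + 2 * n) 1 * (fact n * 2 ^ n) = c ^ n * fact (1 + 2 * n)" by (rule sig_closed)
  have pos: "(fact n * 2 ^ n :: real) > 0" by simp
  have "sig c (2 * n + 1) 1 * (fact n * 2 ^ n) = (c ^ n * (\<Prod>i<n+1. real (2 * i + 1))) * (fact n * 2 ^ n)"
    using 1 fact_odd_prod[of n] by (simp add: add.commute mult_ac)
  then show ?thesis using pos by simp
qed

lemma pow_ne1: "Q > 0 \<Longrightarrow> Q \<noteq> 1 \<Longrightarrow> n > 0 \<Longrightarrow> (Q::real) ^ n \<noteq> 1"
  using power_eq_1_iff[of Q n] by auto

lemma qpoch_Suc: "qpoch Q Q (Suc n) = qpoch Q Q n * (1 - Q ^ Suc n)"
  unfolding qpoch_def by (simp add: mult_ac)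

lemma qpoch_nz: "Q > 0 \<Longrightarrow> Q \<noteq> 1 \<Longrightarrow> qpoch Q Q n \<noteq> 0"
proof (induction n)
  case 0 then show ?case by (simp add: qpoch_def)
next
  case (Suc n)
  then show ?case using pow_ne1[of Q "Suc n"] by (simp add: qpoch_Suc)
qed

lemma qbinom_nn: "Q > 0 \<Longrightarrow> Q \<noteq> 1 \<Longrightarrow> qbinom Q n n = 1"
  unfolding qbinom_def using qpoch_nz[of Q n] by (simp add: qpoch_def)

lemma qbinom_pascal:
  assumes Q: "Q > 0" "Q \<noteq> 1" and j: "j < n"
  shows "qbinom Q (Suc n) (Suc j) = qbinom Q n j + Q ^ Suc j * qbinom Q n (Suc j)"
proof -
  define A where "A = qpoch Q Q j"
  define B where "B = qpoch Q Q (n - Suc j)"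
  define P where "P = qpoch Q Q n"
  define x where "x = Q ^ Suc j"
  define y where "y = Q ^ (n - j)"
  have nj: "n - j = Suc (n - Suc j)" using j by simp
  have xy: "Q ^ Suc n = x * y" unfolding x_def y_def using j by (simp add: power_add[symmetric])
  have hA: "qpoch Q Q (Suc j) = A * (1 - x)" unfolding A_def x_def by (rule qpoch_Suc)
  have hB: "qpoch Q Q (n - j) = B * (1 - y)" unfolding B_def y_def nj by (rule qpoch_Suc)
  have hP: "qpoch Q Q (Suc n) = P * (1 - x * y)" unfolding P_def xy[symmetric] by (rule qpoch_Suc)
  have A0: "A \<noteq> 0" unfolding A_def using qpoch_nz[OF Q] by blast
  have B0: "B \<noteq> 0" unfolding B_def using qpoch_nz[OF Q] by blast
  have x0: "1 - x \<noteq> 0" unfolding x_def using pow_ne1[OF Q, of "Suc j"] by simp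
  have y0: "1 - y \<noteq> 0" unfolding y_def using pow_ne1[OF Q, of "n - j"] j by simp
  have "qbinom Q (Suc n) (Suc j) = P * (1 - x * y) / (A * (1 - x) * (B * (1 - y)))"
    unfolding qbinom_def hA hP using hB by simp
  also have "\<dots> = P / (A * (B * (1 - y))) + x * (P / (A * (1 - x) * B))"
  proof -
    have "P / (A * (B * (1 - y))) + x * (P / (A * (1 - x) * B))
        = (P * (1 - x) + x * P * (1 - y)) / (A * (1 - x) * (B * (1 - y)))"
      using A0 B0 x0 y0 by (simp add: divide_simps)
    also have "P * (1 - x) + x * P * (1 - y) = P * (1 - x * y)" by (simp add: algebra_simps)
    finally show ?thesis by simp
  qed
  also have "\<dots> = qbinom Q n j + Q ^ Suc j * qbinom Q n (Suc j)"
  proof -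
    have q1: "qbinom Q n j = P / (A * (B * (1 - y)))"
      unfolding qbinom_def hB by (simp add: A_def P_def)
    have q2: "qbinom Q n (Suc j) = P / (A * (1 - x) * B)"
      unfolding qbinom_def hA by (simp add: B_def P_def)
    show ?thesis unfolding q1 q2 x_def by simp
  qed
  finally show ?thesis .
qed

lemma qbinom_gb: "Q > 0 \<Longrightarrow> Q \<noteq> 1 \<Longrightarrow> j \<le> n \<Longrightarrow> qbinom Q n j = gb Q n j"
proof (induction n arbitrary: j)
  case 0
  then show ?case by (simp add: qbinom_def qpoch_def)
next
  case (Suc n)
  show ?case
  proof (cases j)
    case 0
    then show ?thesis using qpoch_nz[OF Suc.prems(1,2), of "Suc n"] by (simp add: qbinom_def qpoch_def)
  next
    case (Suc j')
    show ?thesis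
    proof (cases "j' = n")
      case True
      then show ?thesis using Suc Suc.prems Suc.IH[of n] qbinom_nn[OF Suc.prems(1,2)]
        by (simp add: gb_zero)
    next
      case False
      then have "j' < n" using Suc Suc.prems by simp
      then show ?thesis using Suc Suc.prems Suc.IH[of j'] Suc.IH[of "Suc j'"]
        qbinom_pascal[OF Suc.prems(1,2) \<open>j' < n\<close>] by simp
    qed
  qed
qed

lemma qbinom_sym: "j \<le> n \<Longrightarrow> qbinom Q n (n - j) = qbinom Q n j"
  unfolding qbinom_def by (simp add: mult.commute)

lemma F_sym_zero:
  assumes q: "q > 0" "q \<noteq> 1" and k: "k \<ge> 1" and N: "odd N"
  shows "F r k N (- (int r * int N)) q = 0"
proof -
  have Q: "q ^ k > 0" "q ^ k \<noteq> 1" using q k pow_ne1[of q k] by auto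
  define t where "t j = (-1) ^ j * q powr (real r * real j ^ 2 + real_of_int (- (int r * int N)) * real j) * gb (q ^ k) N j" for j
  have F: "F r k N (- (int r * int N)) q = (\<Sum>j=0..N. t j)" unfolding F_def t_def ..
  have "(\<Sum>j=0..N. t j) = (\<Sum>j=0..N. t (N + 0 - j))" by (rule sum.atLeastAtMost_rev)
  also have "\<dots> = (\<Sum>j=0..N. - t j)"
  proof (intro sum.cong refl)
    fix j assume "j \<in> {0..N}"
    then have jN: "j \<le> N" by simp
    have g: "gb (q ^ k) N (N - j) = gb (q ^ k) N j"
      using qbinom_gb[OF Q, of "N - j" N] qbinom_gb[OF Q jN] qbinom_sym[OF jN] by simp
    have s: "(-1::real) ^ (N - j) = - ((-1) ^ j)"
    proof -
      have "even (N - j) \<longleftrightarrow> odd j" using N jN by (simp add: even_diff_nat)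
      then show ?thesis by (simp add: minus_one_power_iff)
    qed
    have e: "real r * real (N - j) ^ 2 + real_of_int (- (int r * int N)) * real (N - j)
        = real r * real j ^ 2 + real_of_int (- (int r * int N)) * real j"
      using jN by (simp add: of_nat_diff power2_eq_square algebra_simps)
    show "t (N + 0 - j) = - t j" unfolding t_def using g s e by simp
  qed
  also have "\<dots> = - (\<Sum>j=0..N. t j)" by (simp add: sum_negf)
  finally show ?thesis using F by simp
qed

lemma denom_lim:
  "((\<lambda>q::real. qpoch q (q\<^sup>2) (n+1) / (1 - q) ^ (n+1)) \<longlongrightarrow> (\<Prod>i<n+1. real (2 * i + 1))) (at 1)"
proof -
  have each: "((\<lambda>q::real. (1 - q powr real (2 * i + 1)) / (1 - q)) \<longlongrightarrow> real (2 * i + 1)) (at 1)" for i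
  proof -
    have "((\<lambda>q::real. - ((q powr real (2 * i + 1) - 1) / (1 - q))) \<longlongrightarrow> - (- real (2 * i + 1))) (at 1)"
      by (intro tendsto_minus powr_quot_lim)
    moreover have "(\<lambda>q::real. - ((q powr real (2 * i + 1) - 1) / (1 - q))) = (\<lambda>q. (1 - q powr real (2 * i + 1)) / (1 - q))"
      by (rule ext) (simp add: minus_divide_left)
    ultimately show ?thesis by (simp add: add.commute)
  qed
  have "((\<lambda>q::real. \<Prod>i<n+1. (1 - q powr real (2 * i + 1)) / (1 - q)) \<longlongrightarrow> (\<Prod>i<n+1. real (2 * i + 1))) (at 1)"
    by (intro tendsto_prod each)
  moreover have "eventually (\<lambda>q::real. (\<Prod>i<n+1. (1 - q powr real (2 * i + 1)) / (1 - q))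
      = qpoch q (q\<^sup>2) (n+1) / (1 - q) ^ (n+1)) (at 1)"
    using ev_pos
  proof eventually_elim
    case (elim q)
    have "(\<Prod>i<n+1. (1 - q powr real (2 * i + 1)) / (1 - q))
        = (\<Prod>i<n+1. 1 - q powr real (2 * i + 1)) / (\<Prod>i<n+1. 1 - q)"
      by (rule prod_dividef)
    also have "(\<Prod>i<n+1. 1 - q) = (1 - q) ^ (n + 1)" by simp
    also have "(\<Prod>i<n+1. 1 - q powr real (2 * i + 1)) = qpoch q (q\<^sup>2) (n+1)"
      unfolding qpoch_def
    proof (intro prod.cong refl)
      fix i
      have "q powr real (2 * i + 1) = q ^ (2 * i + 1)" using elim by (rule powr_realpow)
      also have "\<dots> = (q\<^sup>2) ^ i * q" by (simp add: power_mult power_add)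
      finally show "1 - q powr real (2 * i + 1) = 1 - (q\<^sup>2) ^ i * q" by simp
    qed
    finally show ?case .
  qed
  ultimately show ?thesis by (rule Lim_transform_eventually)
qed

theorem theorem2p4:
  fixes r m k n :: nat
  assumes "k \<ge> 1"
  shows "((\<lambda>q::real. (\<Sum>j = 0..2*n+1. (-1) ^ j * q ^ (r * j\<^sup>2 + m * j)
                             * qbinom (q ^ k) (2*n+1) j)
                    / qpoch q (q\<^sup>2) (n+1))
          \<longlongrightarrow> real ((2*n+1)*r + m) * (real k - 2 * real r) ^ n) (at 1)"
proof -
  define N where "N = 2 * n + 1"
  define c where "c = (of_int (int k - 2 * int r) :: real)"
  define h where "h = int m + int r * int N"
  define m0 where "m0 = - (int r * int N)"
  have cval: "c = real k - 2 * real r" unfolding c_def by simp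
  have oddN: "odd N" unfolding N_def by simp
  have "ent N (sig c N (length [h]) * prod_list (map real_of_int [h])) (F r k N) [h] m0"
    using good_F[of N k r] unfolding good_def c_def by blast
  then have lim0: "((\<lambda>q. D [h] (F r k N) m0 q / (1 - q) ^ (n + 1)) \<longlongrightarrow> sig c N 1 * real_of_int h) (at 1)"
    unfolding ent_def using oddN by (simp add: N_def)
  have ev: "eventually (\<lambda>q. D [h] (F r k N) m0 q / (1 - q) ^ (n + 1) = F r k N (int m) q / (1 - q) ^ (n + 1)) (at 1)"
    using ev_pos ev_ne1
  proof eventually_elim
    case (elim q)
    have "m0 + h = int m" unfolding m0_def h_def by simp
    then show ?case
      using F_sym_zero[OF elim assms oddN, of r] unfolding m0_def[symmetric]
      by (simp add: dif_def)
  qed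
  have limF: "((\<lambda>q. F r k N (int m) q / (1 - q) ^ (n + 1)) \<longlongrightarrow> sig c N 1 * real_of_int h) (at 1)"
    using lim0 ev by (rule Lim_transform_eventually)
  have limD: "((\<lambda>q::real. qpoch q (q\<^sup>2) (n+1) / (1 - q) ^ (n+1)) \<longlongrightarrow> (\<Prod>i<n+1. real (2 * i + 1))) (at 1)"
    by (rule denom_lim)
  have Ppos: "(\<Prod>i<n+1. real (2 * i + 1)) > 0" by (intro prod_pos) auto
  have lim: "((\<lambda>q. (F r k N (int m) q / (1 - q) ^ (n + 1)) / (qpoch q (q\<^sup>2) (n+1) / (1 - q) ^ (n+1)))
      \<longlongrightarrow> (sig c N 1 * real_of_int h) / (\<Prod>i<n+1. real (2 * i + 1))) (at 1)"
    using limF limD Ppos by (intro tendsto_divide) auto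
  have val: "(sig c N 1 * real_of_int h) / (\<Prod>i<n+1. real (2 * i + 1)) = real ((2*n+1)*r + m) * (real k - 2 * real r) ^ n"
  proof -
    define P where "P = (\<Prod>i<n+1. real (2 * i + 1))"
    have s: "sig c N 1 = c ^ n * P" unfolding N_def P_def by (rule sig_val)
    have P0: "P \<noteq> 0" using Ppos unfolding P_def by simp
    have e1: "(sig c N 1 * real_of_int h) / P = c ^ n * real_of_int h" unfolding s using P0 by simp
    have e2: "real_of_int h = real ((2*n+1)*r + m)" unfolding h_def N_def by (simp add: algebra_simps)
    have "(sig c N 1 * real_of_int h) / P = real ((2*n+1)*r + m) * c ^ n" using e1 unfolding e2 by simp
    then show ?thesis unfolding P_def cval .
  qed
  have ev2: "eventually (\<lambda>q. (F r k N (int m) q / (1 - q) ^ (n + 1)) / (qpoch q (q\<^sup>2) (n+1) / (1 - q) ^ (n+1))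
      = (\<Sum>j = 0..2*n+1. (-1) ^ j * q ^ (r * j\<^sup>2 + m * j) * qbinom (q ^ k) (2*n+1) j) / qpoch q (q\<^sup>2) (n+1)) (at 1)"
    using ev_pos ev_ne1
  proof eventually_elim
    case (elim q)
    have Q: "q ^ k > 0" "q ^ k \<noteq> 1" using elim assms pow_ne1[of q k] by auto
    have num: "F r k N (int m) q = (\<Sum>j = 0..2*n+1. (-1) ^ j * q ^ (r * j\<^sup>2 + m * j) * qbinom (q ^ k) (2*n+1) j)"
      unfolding F_def N_def
    proof (intro sum.cong refl)
      fix j assume "j \<in> {0..2*n+1}"
      then have j: "j \<le> 2 * n + 1" by simp
      have "q powr (real r * real j ^ 2 + real_of_int (int m) * real j) = q powr real (r * j\<^sup>2 + m * j)"
        by simp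
      also have "\<dots> = q ^ (r * j\<^sup>2 + m * j)" using elim(1) by (rule powr_realpow)
      finally show "(-1) ^ j * q powr (real r * real j ^ 2 + real_of_int (int m) * real j) * gb (q ^ k) (2 * n + 1) j
          = (-1) ^ j * q ^ (r * j\<^sup>2 + m * j) * qbinom (q ^ k) (2 * n + 1) j"
        using qbinom_gb[OF Q j] by simp
    qed
    have t: "(1 - q) ^ (n + 1) \<noteq> 0" using elim by simp
    show ?case unfolding num using t by simp
  qed
  show ?thesis using Lim_transform_eventually[OF lim ev2] unfolding val .
qed

end
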